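(* Under the Standing Setup (see context), let $\{x^k\}$ be generated by Algorithm 1 and let $x^*$ be its limit, with $f(x^* )=\inf_{x\in B[\bar x,\beta]}f(x)$. Given $\epsilon>0$ and an integer $T$, suppose that $$\|x^{k+1}-x^k\|>\epsilon\quad\text{for } k=0,\dots,T.$$ Then $$T<2+\frac{2}{\rho}\bigl(f(x^0)-f(x^* )\bigr)\epsilon^{-2}.$$
   Context: $B(x,r)$, $B[x,r]$: open and closed Euclidean balls. For $\mu>0$: $e_\mu f(x):=\min_y\{f(y)+\frac{1}{2\mu}\|y-x\|^2\}$ (Moreau envelope), $P_\mu f(x):=\operatorname{argmin}_y\{f(y)+\frac{1}{2\mu}\|y-x\|^2\}$ (proximal operator). $\partial f$: limiting subdifferential. $f$ is $\rho$-weakly convex on $U$ if $f(\alpha x+(1-\alpha)y)\le \alpha f(x)+(1-\alpha)f(y)+\frac{\rho\alpha(1-\alpha)}{2}\|x-y\|^2$ for all $x,y\in U$, $\alpha\in[0,1]$. Standing Fact (cited): if $f$ is $\rho$-weakly convex on $\mathbb{R}^n$, $\rho>0$, $0\in\partial f(\bar x)$ and $\mu\in(0,1/\rho)$, there is $\alpha>0$ such that on $B[\bar x,\alpha]$, $P_\mu f$ is single-valued, $1/(1-\mu\rho)$-Lipschitz, equal to $(I+\mu\partial f)^{-1}$, and $e_\mu f$ is $C^1$ with $\nabla e_\mu f(x)=\mu^{-1}(x-P_\mu f(x))$. Standing Setup: $f:\mathbb{R}^n\to\mathbb{R}\cup\{+\infty\}$ is proper, lower semicontinuous, bounded below and $\rho$-weakly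 convex on $\mathbb{R}^n$, $\rho>0$; $\bar x\in\operatorname{dom}f$ with $0\in\partial f(\bar x)$. Fix $\bar\lambda>0$ and bounded sequences $\{\gamma_k\},\{\lambda_k\}$ with $0<\bar\lambda<2\gamma_k<\lambda_k<1/\rho$ for all $k$. Let $\delta>0$ be such that, for every $k$, the Standing Fact holds on $B[\bar x,\delta]$ for $\mu=\gamma_k$ and $\mu=\lambda_k$, and (Assumption 1) the Moreau envelopes $e_{\gamma_k}f$ and $e_{\lambda_k}f$ are convex on $B[\bar x,\delta]$. For each $k$ let $L_k:=1+\frac{\lambda_k-\gamma_k}{\gamma_k}\bigl(1+\frac{1}{1-\gamma_k\rho}\bigr)$, pick $\sigma_k\in(0,2/L_k^2)$, set $\kappa_k:=1-2\sigma_k+\sigma_k^2L_k^2$, and let $\beta>0$ satisfy $\beta<\min\{\delta,\frac{\delta}{\sigma_k}(1-\sqrt{\kappa_k})\}$ for all $k$. Algorithm 1: choose $x^0\in B[\bar x,\beta]$. Given $x^k\in B[\bar x,\beta]$: (a) compute $z^k\in B(\bar x,\delta)$ with $z^k=x^k-(\lambda_k-\gamma_k)\nabla e_{\gamma_k}f(z^k)$; (b) set $x^{k+1}=z^k-\gamma_k(\lambda_k-\gamma_k)^{-1}(x^k-z^k)$. *)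

theory Defs
  imports "HOL-Analysis.Analysis" "HOL-Library.Extended_Real"
begin

definition proper_fun :: "('a \<Rightarrow> ereal) \<Rightarrow> bool" where
  "proper_fun f \<longleftrightarrow> (\<forall>x. f x \<noteq> -\<infinity>) \<and> (\<exists>x. f x < \<infinity>)"

definition lsc_fun :: "('a::topological_space \<Rightarrow> ereal) \<Rightarrow> bool" where
  "lsc_fun f \<longleftrightarrow> (\<forall>x. f x \<le> Liminf (at x) f)"

definition bounded_below_fun :: "('a \<Rightarrow> ereal) \<Rightarrow> bool" where
  "bounded_below_fun f \<longleftrightarrow> (\<exists>c::real. \<forall>x. ereal c \<le> f x)"

definition weakly_convex_on :: "real \<Rightarrow> 'a::real_normed_vector set \<Rightarrow> ('a \<Rightarrow> ereal) \<Rightarrow> bool" where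
  "weakly_convex_on \<rho> U f \<longleftrightarrow>
     (\<forall>x\<in>U. \<forall>y\<in>U. \<forall>a::real. 0 \<le> a \<and> a \<le> 1 \<longrightarrow>
        f (a *\<^sub>R x + (1 - a) *\<^sub>R y)
          \<le> ereal a * f x + ereal (1 - a) * f y + ereal (\<rho> * a * (1 - a) / 2 * (norm (x - y))\<^sup>2))"

definition frechet_subdiff :: "('a::real_inner \<Rightarrow> ereal) \<Rightarrow> 'a \<Rightarrow> 'a set" where
  "frechet_subdiff f x = {v. \<bar>f x\<bar> \<noteq> \<infinity> \<and>
     (\<forall>e>0. \<exists>d>0. \<forall>y. norm (y - x) < d \<longrightarrow>
        f y \<ge> f x + ereal (inner v (y - x) - e * norm (y - x)))}"

definition limiting_subdiff :: "('a::real_inner \<Rightarrow> ereal) \<Rightarrow> 'a \<Rightarrow> 'a set" where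
  "limiting_subdiff f x = {v. \<exists>xs vs. (xs \<longlonglongrightarrow> x) \<and> ((\<lambda>k. f (xs k)) \<longlonglongrightarrow> f x)
       \<and> (vs \<longlonglongrightarrow> v) \<and> (\<forall>k. vs k \<in> frechet_subdiff f (xs k))}"

definition moreau_env :: "real \<Rightarrow> ('a::real_normed_vector \<Rightarrow> ereal) \<Rightarrow> 'a \<Rightarrow> ereal" where
  "moreau_env \<mu> f x = (INF y. f y + ereal ((norm (y - x))\<^sup>2 / (2 * \<mu>)))"

definition prox :: "real \<Rightarrow> ('a::real_normed_vector \<Rightarrow> ereal) \<Rightarrow> 'a \<Rightarrow> 'a set" where
  "prox \<mu> f x = {y. \<forall>z. f y + ereal ((norm (y - x))\<^sup>2 / (2 * \<mu>))
                         \<le> f z + ereal ((norm (z - x))\<^sup>2 / (2 * \<mu>))}"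

text \<open>Conclusion of the Standing Fact on the closed ball cball xb r for parameter mu:
  P_mu f single-valued, 1/(1 - mu rho)-Lipschitz, equal to (I + mu \<partial>f)^{-1};
  e_mu f real-valued, continuously differentiable with gradient (x - P_mu f x)/mu.\<close>
definition standing_fact_on ::
  "('a::euclidean_space \<Rightarrow> ereal) \<Rightarrow> real \<Rightarrow> real \<Rightarrow> 'a \<Rightarrow> real \<Rightarrow> bool" where
  "standing_fact_on f \<rho> \<mu> xb r \<longleftrightarrow>
     (\<exists>p. (\<forall>x\<in>cball xb r. prox \<mu> f x = {p x})
        \<and> (\<forall>x\<in>cball xb r. \<forall>y\<in>cball xb r. norm (p x - p y) \<le> (1 / (1 - \<mu> * \<rho>)) * norm (x - y))
        \<and> (\<forall>x\<in>cball xb r. prox \<mu> f x = {y. x \<in> (\<lambda>v. y + \<mu> *\<^sub>R v) ` limiting_subdiff f y})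
        \<and> (\<forall>x\<in>cball xb r. \<bar>moreau_env \<mu> f x\<bar> \<noteq> \<infinity> \<and>
              GDERIV (\<lambda>u. real_of_ereal (moreau_env \<mu> f u)) x :> ((1 / \<mu>) *\<^sub>R (x - p x)))
        \<and> continuous_on (cball xb r) (\<lambda>x. (1 / \<mu>) *\<^sub>R (x - p x)))"

end

theory Submission
  imports Defs
begin

lemma grad_ineq:
  fixes E :: "'a::real_inner \<Rightarrow> real"
  assumes cv: "convex_on S E" and zS: "z \<in> S" and xS: "x \<in> S"
    and gd: "GDERIV E z :> g"
  shows "E z + inner g (x - z) \<le> E x"
proof -
  define d where "d = x - z"
  define h where "h t = E (z + t *\<^sub>R d)" for t :: real
  have lin: "((\<lambda>t::real. z + t *\<^sub>R d) has_derivative (\<lambda>t. t *\<^sub>R d)) (at 0)"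
    by (auto intro!: derivative_eq_intros)
  have gd': "(E has_derivative (\<lambda>h. inner h g)) (at (z + 0 *\<^sub>R d))"
    using gd by (simp add: gderiv_def)
  have "(h has_derivative (\<lambda>t. inner (t *\<^sub>R d) g)) (at 0)"
    unfolding h_def using diff_chain_at[OF lin gd'] by (simp add: o_def)
  hence "(h has_field_derivative (inner g d)) (at 0)"
    unfolding has_field_derivative_def
  proof -
    assume a: "(h has_derivative (\<lambda>t. inner (t *\<^sub>R d) g)) (at 0)"
    have "(\<lambda>t. inner (t *\<^sub>R d) g) = (*) (inner g d)"
      by (rule ext) (simp add: inner_commute)
    with a show "(h has_derivative (*) (inner g d)) (at 0)" by simp
  qed
  hence lim: "((\<lambda>t. (h (0 + t) - h 0) / t) \<longlongrightarrow> inner g d) (at 0)"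
    by (simp add: DERIV_def)
  hence lim2: "((\<lambda>t. (h t - h 0) / t) \<longlongrightarrow> inner g d) (at_right 0)"
    using tendsto_mono[OF at_le[of "{0<..}" UNIV]] by simp
  have ev: "eventually (\<lambda>t. (h t - h 0) / t \<le> E x - E z) (at_right (0::real))"
    using eventually_at_right_real[OF zero_less_one]
  proof (rule eventually_mono)
    fix t :: real assume t: "t \<in> {0<..<1}"
    have "z + t *\<^sub>R d = (1 - t) *\<^sub>R z + t *\<^sub>R x" by (simp add: d_def algebra_simps)
    hence "h t \<le> (1 - t) * E z + t * E x"
      unfolding h_def using convex_onD[OF cv, of t z x] t xS zS by auto
    moreover have "h 0 = E z" by (simp add: h_def)
    ultimately have "h t - h 0 \<le> t * (E x - E z)" by (simp add: algebra_simps)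
    thus "(h t - h 0) / t \<le> E x - E z" using t by (simp add: divide_simps mult.commute)
  qed
  have "inner g d \<le> E x - E z"
    by (rule tendsto_le[OF trivial_limit_at_right_real tendsto_const lim2 ev])
  thus ?thesis by (simp add: d_def)
qed


theorem theorem4p7:
  fixes f :: "'a::euclidean_space \<Rightarrow> ereal"
    and \<rho> :: real and xb :: 'a
    and lamb \<delta> \<beta> \<epsilon> :: real
    and \<gamma> lam \<sigma> :: "nat \<Rightarrow> real"
    and x z :: "nat \<Rightarrow> 'a" and xstar :: 'a
    and T :: int
  assumes proper: "proper_fun f"
    and lsc: "lsc_fun f"
    and bdd: "bounded_below_fun f"
    and rho_pos: "\<rho> > 0"
    and wcvx: "weakly_convex_on \<rho> UNIV f"
    and xb_dom: "f xb < \<infinity>"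
    and crit: "0 \<in> limiting_subdiff f xb"
    and lb_pos: "lamb > 0"
    and bdd_gamma: "bounded (range \<gamma>)"
    and bdd_lambda: "bounded (range lam)"
    and param: "\<And>k. lamb < 2 * \<gamma> k \<and> 2 * \<gamma> k < lam k \<and> lam k < 1 / \<rho>"
    and delta_pos: "\<delta> > 0"
    and sf_gamma: "\<And>k. standing_fact_on f \<rho> (\<gamma> k) xb \<delta>"
    and sf_lambda: "\<And>k. standing_fact_on f \<rho> (lam k) xb \<delta>"
    and cvx_gamma: "\<And>k. convex_on (cball xb \<delta>) (\<lambda>u. real_of_ereal (moreau_env (\<gamma> k) f u))"
    and cvx_lambda: "\<And>k. convex_on (cball xb \<delta>) (\<lambda>u. real_of_ereal (moreau_env (lam k) f u))"
    and sigma: "\<And>k. 0 < \<sigma> k \<and>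
        \<sigma> k < 2 / (1 + (lam k - \<gamma> k) / \<gamma> k * (1 + 1 / (1 - \<gamma> k * \<rho>)))\<^sup>2"
    and beta_pos: "\<beta> > 0"
    and beta: "\<And>k. \<beta> < \<delta> \<and>
        \<beta> < \<delta> / \<sigma> k * (1 - sqrt (1 - 2 * \<sigma> k + (\<sigma> k)\<^sup>2 *
               (1 + (lam k - \<gamma> k) / \<gamma> k * (1 + 1 / (1 - \<gamma> k * \<rho>)))\<^sup>2))"
    and alg_x: "\<And>k. x k \<in> cball xb \<beta>"
    and alg_z: "\<And>k. z k \<in> ball xb \<delta> \<and>
        (\<exists>g. GDERIV (\<lambda>u. real_of_ereal (moreau_env (\<gamma> k) f u)) (z k) :> g
             \<and> z k = x k - (lam k - \<gamma> k) *\<^sub>R g)"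
    and alg_step: "\<And>k. x (Suc k) = z k - (\<gamma> k / (lam k - \<gamma> k)) *\<^sub>R (x k - z k)"
    and lim: "x \<longlonglongrightarrow> xstar"
    and fstar: "f xstar = (INF u\<in>cball xb \<beta>. f u)"
    and eps_pos: "\<epsilon> > 0"
    and gap: "\<And>k. int k \<le> T \<Longrightarrow> norm (x (Suc k) - x k) > \<epsilon>"
  shows "ereal (real_of_int T) < 2 + ereal (2 / \<rho>) * (f (x 0) - f xstar) * ereal (1 / \<epsilon>\<^sup>2)"
proof -
  define Ef where "Ef k u = real_of_ereal (moreau_env (\<gamma> k) f u)" for k u
  have step: "\<exists>v. f (x (Suc k)) = ereal v \<and>
      ereal (v + \<rho> / 2 * (norm (x (Suc k) - x k))\<^sup>2) \<le> f (x k)" for k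
  proof -
    obtain p where P1: "\<forall>u\<in>cball xb \<delta>. prox (\<gamma> k) f u = {p u}"
      and P4: "\<forall>u\<in>cball xb \<delta>. \<bar>moreau_env (\<gamma> k) f u\<bar> \<noteq> \<infinity> \<and>
              GDERIV (\<lambda>u. real_of_ereal (moreau_env (\<gamma> k) f u)) u :> ((1 / \<gamma> k) *\<^sub>R (u - p u))"
      using sf_gamma[of k] unfolding standing_fact_on_def by blast
    have zc: "z k \<in> cball xb \<delta>" using alg_z[of k] by auto
    have xc: "x k \<in> cball xb \<delta>" using alg_x[of k] beta[of k] by (auto simp: dist_norm)
    obtain g where gd: "GDERIV (Ef k) (z k) :> g" and zeq: "z k = x k - (lam k - \<gamma> k) *\<^sub>R g"
      using alg_z[of k] unfolding Ef_def by blast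
    have gd2: "GDERIV (Ef k) (z k) :> ((1 / \<gamma> k) *\<^sub>R (z k - p (z k)))"
      using P4 zc unfolding Ef_def by blast
    have gp: "0 < \<gamma> k" "\<gamma> k < lam k" "lam k < 1 / \<rho>" using param[of k] lb_pos by auto
    have geq: "g = (1 / \<gamma> k) *\<^sub>R (z k - p (z k))"
    proof -
      define g' where "g' = (1 / \<gamma> k) *\<^sub>R (z k - p (z k))"
      have "(\<lambda>h. inner h g) = (\<lambda>h. inner h g')"
        using has_derivative_unique gd gd2 unfolding gderiv_def g'_def by blast
      hence "inner (g - g') g = inner (g - g') g'" by metis
      hence "inner (g - g') (g - g') = 0" by (simp add: inner_diff_right)
      thus ?thesis unfolding g'_def by simp
    qed
    have xmz: "x k - z k = (lam k - \<gamma> k) *\<^sub>R g" using zeq by (simp add: algebra_simps)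
    have "x (Suc k) = z k - (\<gamma> k / (lam k - \<gamma> k)) *\<^sub>R ((lam k - \<gamma> k) *\<^sub>R g)"
      using alg_step[of k] xmz by simp
    also have "\<dots> = z k - \<gamma> k *\<^sub>R g" using gp by simp
    finally have w1: "x (Suc k) = z k - \<gamma> k *\<^sub>R g" .
    hence wp: "x (Suc k) = p (z k)" using geq gp by simp
    have wprox: "x (Suc k) \<in> prox (\<gamma> k) f (z k)" using P1 zc wp by simp
    define q where "q = (norm (x (Suc k) - z k))\<^sup>2 / (2 * \<gamma> k)"
    have qv: "q = \<gamma> k / 2 * (norm g)\<^sup>2"
    proof -
      have "norm (x (Suc k) - z k) = \<gamma> k * norm g" using w1 gp by simp
      thus ?thesis unfolding q_def using gp by (simp add: power2_eq_square field_simps)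
    qed
    have menv: "moreau_env (\<gamma> k) f (z k) = f (x (Suc k)) + ereal q"
      unfolding moreau_env_def q_def
    proof (rule antisym)
      show "(INF y. f y + ereal ((norm (y - z k))\<^sup>2 / (2 * \<gamma> k)))
          \<le> f (x (Suc k)) + ereal ((norm (x (Suc k) - z k))\<^sup>2 / (2 * \<gamma> k))"
        by (rule INF_lower) simp
      show "f (x (Suc k)) + ereal ((norm (x (Suc k) - z k))\<^sup>2 / (2 * \<gamma> k))
          \<le> (INF y. f y + ereal ((norm (y - z k))\<^sup>2 / (2 * \<gamma> k)))"
        using wprox unfolding prox_def by (auto intro: INF_greatest)
    qed
    have mx: "moreau_env (\<gamma> k) f (x k) \<le> f (x k)"
    proof -
      have "moreau_env (\<gamma> k) f (x k) \<le> f (x k) + ereal ((norm (x k - x k))\<^sup>2 / (2 * \<gamma> k))"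
        unfolding moreau_env_def by (rule INF_lower) simp
      thus ?thesis by simp
    qed
    have fz: "moreau_env (\<gamma> k) f (z k) = ereal (Ef k (z k))"
      using P4 zc unfolding Ef_def by (simp add: ereal_real')
    have fx: "moreau_env (\<gamma> k) f (x k) = ereal (Ef k (x k))"
      using P4 xc unfolding Ef_def by (simp add: ereal_real')
    have ninf: "f (x (Suc k)) \<noteq> -\<infinity>" using proper unfolding proper_fun_def by blast
    have pinf: "f (x (Suc k)) \<noteq> \<infinity>" using menv fz by auto
    obtain v where fv: "f (x (Suc k)) = ereal v" using ninf pinf by (cases "f (x (Suc k))") auto
    have vE: "v = Ef k (z k) - q" using menv fz fv by simp
    have conv: "Ef k (z k) + inner g (x k - z k) \<le> Ef k (x k)"
      by (rule grad_ineq[OF _ zc xc gd]) (use cvx_gamma[of k] in \<open>simp add: Ef_def[abs_def]\<close>)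
    have inr: "inner g (x k - z k) = (lam k - \<gamma> k) * (norm g)\<^sup>2"
      using xmz by (simp add: power2_norm_eq_inner)
    have dn: "norm (x (Suc k) - x k) = lam k * norm g"
    proof -
      have "x (Suc k) - x k = (z k - \<gamma> k *\<^sub>R g) - (z k + (lam k - \<gamma> k) *\<^sub>R g)"
        using w1 xmz by (metis diff_add_cancel add.commute)
      also have "\<dots> = - (lam k *\<^sub>R g)" by (simp add: algebra_simps)
      finally have "x (Suc k) - x k = - (lam k *\<^sub>R g)" .
      thus ?thesis using gp by simp
    qed
    have rl: "\<rho> * lam k < 1" using gp rho_pos by (simp add: field_simps)
    have key: "\<rho> / 2 * (lam k * norm g)\<^sup>2 \<le> \<gamma> k / 2 * (norm g)\<^sup>2 + (lam k - \<gamma> k) * (norm g)\<^sup>2"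
    proof -
      have N: "0 \<le> (norm g)\<^sup>2" by simp
      have "\<rho> * lam k * lam k \<le> lam k" using rl gp by (simp add: mult_right_le_one_le)
      hence "\<rho> * lam k * lam k \<le> 2 * lam k - \<gamma> k" using gp by linarith
      hence "\<rho> * lam k * lam k * (norm g)\<^sup>2 \<le> (2 * lam k - \<gamma> k) * (norm g)\<^sup>2"
        using N by (rule mult_right_mono)
      thus ?thesis by (simp add: power_mult_distrib power2_eq_square algebra_simps)
    qed
    have "v + \<rho> / 2 * (norm (x (Suc k) - x k))\<^sup>2 \<le> Ef k (x k)"
      unfolding dn using vE qv conv inr key by linarith
    hence "ereal (v + \<rho> / 2 * (norm (x (Suc k) - x k))\<^sup>2) \<le> f (x k)"
      using mx fx by (metis ereal_less_eq(3) order_trans)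
    thus ?thesis using fv by blast
  qed
  obtain cb :: real where cb: "\<And>u. ereal cb \<le> f u" using bdd unfolding bounded_below_fun_def by blast
  have fsl: "f xstar \<le> f (x n)" for n unfolding fstar by (rule INF_lower) (rule alg_x)
  have "f xstar \<ge> ereal cb" unfolding fstar by (rule INF_greatest) (rule cb)
  moreover obtain v1 where "f (x (Suc 0)) = ereal v1" using step[of 0] by blast
  ultimately obtain s where fs: "f xstar = ereal s" using fsl[of "Suc 0"]
    by (cases "f xstar") auto
  show ?thesis
  proof (cases "f (x 0) = \<infinity>")
    case True
    have "2 / \<rho> > 0" "1 / \<epsilon>\<^sup>2 > 0" using rho_pos eps_pos by auto
    thus ?thesis using True fs by (simp add: ereal_mult_infty ereal_infty_mult)
  next
    case False
    have "f (x 0) \<noteq> -\<infinity>" using proper unfolding proper_fun_def by blast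
    with False obtain a where fa: "f (x 0) = ereal a" by (cases "f (x 0)") auto
    define F where "F n = real_of_ereal (f (x n))" for n
    have ind: "f (x n) = ereal (F n) \<and> F n + \<rho> / 2 * (\<Sum>k<n. (norm (x (Suc k) - x k))\<^sup>2) \<le> a" for n
    proof (induction n)
      case 0 thus ?case using fa by (simp add: F_def)
    next
      case (Suc n)
      obtain v where v: "f (x (Suc n)) = ereal v"
        and le: "ereal (v + \<rho> / 2 * (norm (x (Suc n) - x n))\<^sup>2) \<le> f (x n)"
        using step[of n] by blast
      have "v + \<rho> / 2 * (norm (x (Suc n) - x n))\<^sup>2 \<le> F n" using le Suc.IH by simp
      moreover have "F (Suc n) = v" using v by (simp add: F_def)
      ultimately show ?case using Suc.IH v by (simp add: distrib_left)
    qed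
    have sF: "s \<le> F n" for n using fsl[of n] fs ind[of n] by simp
    have rhs: "2 + ereal (2 / \<rho>) * (f (x 0) - f xstar) * ereal (1 / \<epsilon>\<^sup>2)
        = ereal (2 + 2 / \<rho> * (a - s) * (1 / \<epsilon>\<^sup>2))" using fa fs by simp
    have as: "s \<le> a" using sF[of 0] ind[of 0] by simp
    have nn: "0 \<le> 2 / \<rho> * (a - s) * (1 / \<epsilon>\<^sup>2)" using as rho_pos by simp
    have "real_of_int T < 2 + 2 / \<rho> * (a - s) * (1 / \<epsilon>\<^sup>2)"
    proof (cases "T < 0")
      case True thus ?thesis using nn by linarith
    next
      case False
      define n where "n = Suc (nat T)"
      have "(\<Sum>k<n. \<epsilon>\<^sup>2) < (\<Sum>k<n. (norm (x (Suc k) - x k))\<^sup>2)"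
      proof (rule sum_strict_mono)
        show "finite {..<n}" by simp
        show "{..<n} \<noteq> {}" by (auto simp: n_def)
        fix k assume "k \<in> {..<n}"
        hence "int k \<le> T" using False by (simp add: n_def)
        hence "\<epsilon> < norm (x (Suc k) - x k)" by (rule gap)
        thus "\<epsilon>\<^sup>2 < (norm (x (Suc k) - x k))\<^sup>2" using eps_pos by (simp add: power_strict_mono)
      qed
      hence "real n * \<epsilon>\<^sup>2 < (\<Sum>k<n. (norm (x (Suc k) - x k))\<^sup>2)" by simp
      hence "\<rho> / 2 * (real n * \<epsilon>\<^sup>2) < \<rho> / 2 * (\<Sum>k<n. (norm (x (Suc k) - x k))\<^sup>2)"
        using rho_pos by simp
      hence lt: "\<rho> / 2 * (real n * \<epsilon>\<^sup>2) < a - s" using ind[of n] sF[of n] by linarith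
      have "real n < 2 / \<rho> * (a - s) * (1 / \<epsilon>\<^sup>2)"
        using lt rho_pos eps_pos by (simp add: field_simps)
      moreover have "real_of_int T < real n" using False by (simp add: n_def)
      ultimately show ?thesis by linarith
    qed
    thus ?thesis unfolding rhs by simp
  qed
qed

end
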